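(* For every $N\times N$ stochastic matrix $A$ and every $t\geq 1$, $$\mathbb E\|\hat{\boldsymbol\theta}_t-\theta\mathbf 1\|^2\leq \frac{N}{t}\,\mathbb E\|\mathbf X_1-\theta\mathbf 1\|^2 .$$ Consequently $\mathbb E\|\hat{\boldsymbol\theta}_t-\theta\mathbf 1\|^2\to 0$ as $t\to\infty$, and $\hat\theta^{(i)}_t\to\theta$ in probability for each $i\in\{1,\dots,N\}$.
   Context: Let $X$ be a square-integrable real random variable with $\mathbb E X=\theta$ and $\mathrm{Var}(X)=\sigma^2$. Fix an integer $N\geq 2$. For $i\in\{1,\dots,N\}$ and $t\geq 1$ let $X_t^{(i)}$ be random variables distributed as $X$, mutually independent over both $i$ and $t$, and write $\mathbf X_t=(X_t^{(1)},\dots,X_t^{(N)})^\top$. Let $A=(a_{ij})_{1\le i,j\le N}$ be a stochastic matrix ($a_{ij}\geq 0$ and every row sums to $1$). Define $\hat{\boldsymbol\theta}_1=\mathbf X_1$ and $\hat{\boldsymbol\theta}_{t+1}=\frac{t}{t+1}A\hat{\boldsymbol\theta}_t+\frac{1}{t+1}\mathbf X_{t+1}$ for $t\geq 1$, and write $\hat{\boldsymbol\theta}_t=(\hat\theta^{(1)}_t,\dots,\hat\theta^{(N)}_t)^\top$. Let $\mathbf 1=(1,\dots,1)^\top$ and $\|\cdot\|$ the Euclidean norm. *)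

theory Defs
  imports "HOL-Analysis.Analysis" "HOL-Probability.Probability"
begin

definition stochastic_matrix :: "real ^ 'n ^ 'n \<Rightarrow> bool" where
  "stochastic_matrix A \<longleftrightarrow>
     (\<forall>i j. 0 \<le> A $ i $ j) \<and> (\<forall>i. (\<Sum>j\<in>UNIV. A $ i $ j) = 1)"

definition obs_vec :: "(nat \<Rightarrow> 'n::finite \<Rightarrow> 'a \<Rightarrow> real) \<Rightarrow> nat \<Rightarrow> 'a \<Rightarrow> real ^ 'n" where
  "obs_vec X t \<omega> = (\<chi> i. X t i \<omega>)"

text \<open>est_aux A X k is the estimate at time k+1.\<close>
primrec est_aux :: "real ^ 'n ^ 'n \<Rightarrow> (nat \<Rightarrow> 'n::finite \<Rightarrow> 'a \<Rightarrow> real) \<Rightarrow> nat \<Rightarrow> 'a \<Rightarrow> real ^ 'n" where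
  "est_aux A X 0 \<omega> = obs_vec X 1 \<omega>"
| "est_aux A X (Suc k) \<omega> =
     (real (Suc k) / real (Suc (Suc k))) *\<^sub>R (A *v est_aux A X k \<omega>)
     + (1 / real (Suc (Suc k))) *\<^sub>R obs_vec X (Suc (Suc k)) \<omega>"

definition theta_hat :: "real ^ 'n ^ 'n \<Rightarrow> (nat \<Rightarrow> 'n::finite \<Rightarrow> 'a \<Rightarrow> real) \<Rightarrow> nat \<Rightarrow> 'a \<Rightarrow> real ^ 'n" where
  "theta_hat A X t = est_aux A X (t - 1)"

end

theory Submission
  imports Defs
begin

lemma sq_prod_integrable:
  fixes f g :: "'a \<Rightarrow> real"
  assumes [measurable]: "f \<in> borel_measurable M" "g \<in> borel_measurable M"
    and "integrable M (\<lambda>x. (f x)^2)" "integrable M (\<lambda>x. (g x)^2)"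
  shows "integrable M (\<lambda>x. f x * g x)"
proof (rule Bochner_Integration.integrable_bound[where f="\<lambda>x. (f x)^2 + (g x)^2"])
  show "integrable M (\<lambda>x. (f x)^2 + (g x)^2)" using assms by auto
  show "(\<lambda>x. f x * g x) \<in> borel_measurable M" by measurable
  show "AE x in M. norm (f x * g x) \<le> norm ((f x)^2 + (g x)^2)"
  proof (intro AE_I2)
    fix x
    have "\<bar>f x * g x\<bar> \<le> (f x)^2 + (g x)^2"
    proof -
      have "0 \<le> (\<bar>f x\<bar> - \<bar>g x\<bar>)^2" by simp
      then have "2*\<bar>f x\<bar>*\<bar>g x\<bar> \<le> (f x)^2 + (g x)^2"
        by (simp add: power2_diff algebra_simps)
      moreover have "0 \<le> \<bar>f x\<bar>*\<bar>g x\<bar>" by simp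
      ultimately have "\<bar>f x\<bar>*\<bar>g x\<bar> \<le> (f x)^2 + (g x)^2" by linarith
      then show ?thesis by (simp add: abs_mult)
    qed
    then show "norm (f x * g x) \<le> norm ((f x)^2 + (g x)^2)" by simp
  qed
qed

lemma sq_add_integrable:
  fixes f g :: "'a \<Rightarrow> real"
  assumes [measurable]: "f \<in> borel_measurable M" "g \<in> borel_measurable M"
    and "integrable M (\<lambda>x. (f x)^2)" "integrable M (\<lambda>x. (g x)^2)"
  shows "integrable M (\<lambda>x. (f x + g x)^2)"
proof -
  have "(\<lambda>x. (f x + g x)^2) = (\<lambda>x. (f x)^2 + 2 * (f x * g x) + (g x)^2)"
    by (simp add: fun_eq_iff power2_sum)
  moreover have "integrable M (\<lambda>x. f x * g x)" by (rule sq_prod_integrable) (use assms in auto)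
  ultimately show ?thesis using assms by auto
qed

lemma sq_sum_integrable:
  fixes F :: "'b \<Rightarrow> 'a \<Rightarrow> real"
  assumes "finite S" "\<And>j. j \<in> S \<Longrightarrow> F j \<in> borel_measurable M"
    "\<And>j. j \<in> S \<Longrightarrow> integrable M (\<lambda>x. (F j x)^2)"
  shows "integrable M (\<lambda>x. (\<Sum>j\<in>S. F j x)^2)"
  using assms
proof (induction S rule: finite_induct)
  case empty then show ?case by simp
next
  case (insert a S)
  have "(\<lambda>x. (\<Sum>j\<in>insert a S. F j x)^2) = (\<lambda>x. (F a x + (\<Sum>j\<in>S. F j x))^2)"
    using insert by simp
  moreover have "integrable M (\<lambda>x. (F a x + (\<Sum>j\<in>S. F j x))^2)"
    by (rule sq_add_integrable) (use insert in auto)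
  ultimately show ?case by simp
qed

lemma sq_scale_integrable:
  fixes f :: "'a \<Rightarrow> real"
  assumes "integrable M (\<lambda>x. (f x)^2)"
  shows "integrable M (\<lambda>x. (c * f x)^2)"
  using assms by (simp add: power_mult_distrib)

lemma convex_sq:
  fixes a x :: "'b \<Rightarrow> real"
  assumes "finite S" "\<And>j. j \<in> S \<Longrightarrow> 0 \<le> a j" "sum a S = 1"
  shows "(\<Sum>j\<in>S. a j * x j)^2 \<le> (\<Sum>j\<in>S. a j * (x j)^2)"
proof -
  define m where "m = (\<Sum>j\<in>S. a j * x j)"
  have "0 \<le> (\<Sum>j\<in>S. a j * (x j - m)^2)" by (intro sum_nonneg) (use assms in auto)
  also have "\<dots> = (\<Sum>j\<in>S. a j * (x j)^2) - 2 * m * (\<Sum>j\<in>S. a j * x j) + m^2 * sum a S"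
  proof -
    have "(\<Sum>j\<in>S. a j * (x j - m)^2) = (\<Sum>j\<in>S. a j * (x j)^2 - 2 * m * (a j * x j) + m^2 * a j)"
      by (intro sum.cong) (auto simp: power2_diff algebra_simps)
    also have "\<dots> = (\<Sum>j\<in>S. a j * (x j)^2) - 2 * m * (\<Sum>j\<in>S. a j * x j) + m^2 * sum a S"
      by (simp add: sum.distrib sum_subtractf sum_distrib_left)
    finally show ?thesis .
  qed
  finally show ?thesis using assms(3) by (simp add: m_def power2_eq_square)
qed

lemma aux_field: "(c::real) \<noteq> 0 \<Longrightarrow> c * (a / c * s + 1 / c * x - t) = a * s + x - c * t"
  by (simp add: field_simps)

theorem mainTheorem3:
  fixes M :: "'a measure"
    and Y :: "'a \<Rightarrow> real"
    and X :: "nat \<Rightarrow> 'n::finite \<Rightarrow> 'a \<Rightarrow> real"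
    and A :: "real ^ 'n ^ 'n"
  assumes "prob_space M"
    and "CARD('n) \<ge> 2"
    and "Y \<in> borel_measurable M"
    and "integrable M (\<lambda>\<omega>. (Y \<omega>)\<^sup>2)"
    and "prob_space.indep_vars M (\<lambda>_. borel) (\<lambda>(t, i). X t i) ({1..} \<times> UNIV)"
    and "\<And>t i. t \<ge> 1 \<Longrightarrow> distr M borel (X t i) = distr M borel Y"
    and "stochastic_matrix A"
  shows "(\<forall>t\<ge>1. prob_space.expectation M
             (\<lambda>\<omega>. (norm (theta_hat A X t \<omega> - (\<chi> i. prob_space.expectation M Y)))\<^sup>2)
           \<le> real CARD('n) / real t * prob_space.expectation M
             (\<lambda>\<omega>. (norm (obs_vec X 1 \<omega> - (\<chi> i. prob_space.expectation M Y)))\<^sup>2))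
    \<and> (\<lambda>t. prob_space.expectation M
             (\<lambda>\<omega>. (norm (theta_hat A X t \<omega> - (\<chi> i. prob_space.expectation M Y)))\<^sup>2))
        \<longlonglongrightarrow> 0
    \<and> (\<forall>i. \<forall>\<epsilon>>0. (\<lambda>t. measure M {\<omega> \<in> space M.
             \<bar>theta_hat A X t \<omega> $ i - prob_space.expectation M Y\<bar> > \<epsilon>}) \<longlonglongrightarrow> 0)"
proof -
  interpret prob_space M by fact
  define \<theta> where "\<theta> = expectation Y"
  define V where "V = expectation (\<lambda>\<omega>. (Y \<omega> - \<theta>)^2)"
  define Z where "Z = (\<lambda>s i \<omega>. X s i \<omega> - \<theta>)"
  define w where "w = (\<lambda>k i \<omega>. real (Suc k) * (est_aux A X k \<omega> $ i - \<theta>))"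
  have Ym[measurable]: "Y \<in> borel_measurable M" by fact
  have Yint: "integrable M Y"
    by (rule square_integrable_imp_integrable) (use assms in auto)
  have Ysq: "integrable M (\<lambda>\<omega>. (Y \<omega> - \<theta>)^2)"
  proof -
    have "(\<lambda>\<omega>. (Y \<omega> - \<theta>)^2) = (\<lambda>\<omega>. (Y \<omega>)^2 - 2*\<theta>*Y \<omega> + \<theta>^2)"
      by (simp add: fun_eq_iff power2_diff algebra_simps)
    then show ?thesis using assms(4) Yint by auto
  qed
  have Xm: "X s i \<in> borel_measurable M" if "s \<ge> 1" for s i
    using assms(5) that by (auto simp: indep_vars_def)
  have dist: "(integrable M (\<lambda>\<omega>. g (X s i \<omega>)) \<longleftrightarrow> integrable M (\<lambda>\<omega>. g (Y \<omega>))) \<and>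
      integral\<^sup>L M (\<lambda>\<omega>. g (X s i \<omega>)) = integral\<^sup>L M (\<lambda>\<omega>. g (Y \<omega>))"
    if "s \<ge> 1" "g \<in> borel_measurable borel" for s i and g :: "real \<Rightarrow> real"
  proof -
    have m: "X s i \<in> measurable M borel" using Xm[OF that(1)] by simp
    have d: "distr M borel (X s i) = distr M borel Y" using assms(6) that(1) by simp
    show ?thesis
      using integrable_distr_eq[OF m that(2)] integrable_distr_eq[OF Ym that(2)]
        integral_distr[OF m that(2)] integral_distr[OF Ym that(2)] d by simp
  qed
  have Zm[measurable]: "Z s i \<in> borel_measurable M" if "s \<ge> 1" for s i
  proof -
    have [measurable]: "X s i \<in> borel_measurable M" using Xm that .
    show ?thesis unfolding Z_def by measurable
  qed
  have gm: "(\<lambda>x::real. (x - \<theta>)^2) \<in> borel_measurable borel" by measurable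
  have idm: "(\<lambda>x::real. x) \<in> borel_measurable borel" by simp
  have Zsq: "integrable M (\<lambda>\<omega>. (Z s i \<omega>)^2)" and ZV: "expectation (\<lambda>\<omega>. (Z s i \<omega>)^2) = V"
    if "s \<ge> 1" for s i
    using dist[OF that gm, of i] Ysq by (auto simp: Z_def V_def)
  have Xint: "integrable M (X s i)" and XE: "expectation (X s i) = \<theta>" if "s\<ge>1" for s i
    using dist[OF that idm, of i] Yint by (auto simp: \<theta>_def)
  have ZE: "integrable M (Z s i)" "expectation (Z s i) = 0" if "s\<ge>1" for s i
    using Xint[OF that] XE[OF that] by (auto simp: Z_def prob_space)
  have cross0: "expectation (\<lambda>\<omega>. Z s i \<omega> * Z s' j \<omega>) = 0"
    if "s \<ge> 1" "s' \<ge> 1" "(s, i) \<noteq> (s', j)" for s i s' j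
  proof -
    define F where "F = (\<lambda>p::nat \<times> 'n. \<lambda>x. (\<lambda>(t, i). X t i) p x - \<theta>)"
    have "indep_vars (\<lambda>_. borel) (\<lambda>p x. (\<lambda>_ x. x - \<theta>) p ((\<lambda>(t, i). X t i) p x)) ({1..} \<times> UNIV)"
      by (rule indep_vars_compose2[OF assms(5)]) simp
    then have "indep_vars (\<lambda>_. borel) F ({1..} \<times> UNIV)" by (simp add: F_def)
    then have ind: "indep_vars (\<lambda>_. borel) F {(s,i),(s',j)}"
      by (rule indep_vars_subset) (use that in auto)
    have FZ: "F (t, k) = Z t k" for t k by (simp add: F_def Z_def)
    have "expectation (\<lambda>\<omega>. \<Prod>p\<in>{(s,i),(s',j)}. F p \<omega>) = (\<Prod>p\<in>{(s,i),(s',j)}. expectation (F p))"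
      by (rule indep_vars_lebesgue_integral[OF _ ind]) (use that ZE in \<open>auto simp: FZ\<close>)
    then show ?thesis using that ZE by (simp add: FZ)
  qed
  have rowsum: "(\<Sum>j\<in>UNIV. A $ i $ j) = 1" and Anonneg: "0 \<le> A $ i $ j" for i j
    using assms(7) by (auto simp: stochastic_matrix_def)
  have w0: "w 0 i \<omega> = Z 1 i \<omega>" for i \<omega> by (simp add: w_def Z_def obs_vec_def)
  have wS: "w (Suc k) i \<omega> = (\<Sum>j\<in>UNIV. A $ i $ j * w k j \<omega>) + Z (Suc (Suc k)) i \<omega>" for k i \<omega>
  proof -
    let ?v = "est_aux A X k \<omega>"
    have "(\<Sum>j\<in>UNIV. A $ i $ j * w k j \<omega>) = (\<Sum>j\<in>UNIV. real (Suc k) * (A $ i $ j * ?v $ j) - real (Suc k) * \<theta> * A $ i $ j)"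
      by (intro sum.cong) (auto simp: w_def algebra_simps)
    also have "\<dots> = real (Suc k) * (\<Sum>j\<in>UNIV. A $ i $ j * ?v $ j) - real (Suc k) * \<theta>"
      by (simp add: sum_subtractf sum_distrib_left[symmetric] rowsum)
    finally have 1: "(\<Sum>j\<in>UNIV. A $ i $ j * w k j \<omega>) = real (Suc k) * (\<Sum>j\<in>UNIV. A $ i $ j * ?v $ j) - real (Suc k) * \<theta>" .
    let ?s = "\<Sum>j\<in>UNIV. A $ i $ j * ?v $ j"
    have e: "est_aux A X (Suc k) \<omega> $ i = real (Suc k) / real (Suc (Suc k)) * ?s
       + 1 / real (Suc (Suc k)) * X (Suc (Suc k)) i \<omega>"
      by (simp add: matrix_vector_mult_def obs_vec_def)
    have "w (Suc k) i \<omega> = real (Suc (Suc k)) * (est_aux A X (Suc k) \<omega> $ i - \<theta>)"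
      unfolding w_def by simp
    also have "\<dots> = real (Suc k) * ?s + X (Suc (Suc k)) i \<omega> - real (Suc (Suc k)) * \<theta>"
      unfolding e by (rule aux_field) simp
    also have "\<dots> = (\<Sum>j\<in>UNIV. A $ i $ j * w k j \<omega>) + Z (Suc (Suc k)) i \<omega>"
      unfolding 1 by (simp add: Z_def algebra_simps)
    finally show ?thesis .
  qed
  have main: "\<forall>i. w k i \<in> borel_measurable M \<and> integrable M (\<lambda>\<omega>. (w k i \<omega>)^2)
      \<and> expectation (\<lambda>\<omega>. (w k i \<omega>)^2) \<le> real (Suc k) * V
      \<and> (\<forall>s j. Suc k < s \<longrightarrow> expectation (\<lambda>\<omega>. w k i \<omega> * Z s j \<omega>) = 0)" for k
  proof (induction k)
    case 0
    show ?case
    proof (intro allI conjI impI)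
      fix i
      have e: "w 0 i = Z 1 i" by (simp add: fun_eq_iff w0)
      show "w 0 i \<in> borel_measurable M" unfolding e by (rule Zm) simp
      show "integrable M (\<lambda>\<omega>. (w 0 i \<omega>)^2)" unfolding e by (rule Zsq) simp
      show "expectation (\<lambda>\<omega>. (w 0 i \<omega>)^2) \<le> real (Suc 0) * V" unfolding e using ZV[of 1 i] by simp
      fix s j assume "Suc 0 < s"
      then show "expectation (\<lambda>\<omega>. w 0 i \<omega> * Z s j \<omega>) = 0" unfolding e by (intro cross0) auto
    qed
  next
    case (Suc k)
    show ?case
    proof (intro allI conjI impI)
      fix i
      have wm[measurable]: "w k j \<in> borel_measurable M" for j using Suc by blast
      have wsq: "integrable M (\<lambda>\<omega>. (w k j \<omega>)^2)" for j using Suc by blast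
      have wE: "expectation (\<lambda>\<omega>. (w k j \<omega>)^2) \<le> real (Suc k) * V" for j using Suc by blast
      have wZ: "expectation (\<lambda>\<omega>. w k j \<omega> * Z s l \<omega>) = 0" if "Suc k < s" for j s l
        using Suc that by blast
      define S where "S = (\<lambda>\<omega>. \<Sum>j\<in>UNIV. A $ i $ j * w k j \<omega>)"
      define Z' where "Z' = Z (Suc (Suc k)) i"
      have e: "w (Suc k) i = (\<lambda>\<omega>. S \<omega> + Z' \<omega>)" by (simp add: fun_eq_iff wS S_def Z'_def)
      have Sm[measurable]: "S \<in> borel_measurable M" unfolding S_def by measurable
      have Z'm[measurable]: "Z' \<in> borel_measurable M" unfolding Z'_def by (rule Zm) simp
      have Ssq: "integrable M (\<lambda>\<omega>. (S \<omega>)^2)" unfolding S_def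
        by (rule sq_sum_integrable) (auto intro: sq_scale_integrable wsq)
      have Z'sq: "integrable M (\<lambda>\<omega>. (Z' \<omega>)^2)" unfolding Z'_def by (rule Zsq) simp
      have Z'V: "expectation (\<lambda>\<omega>. (Z' \<omega>)^2) = V" unfolding Z'_def by (rule ZV) simp
      show "w (Suc k) i \<in> borel_measurable M" unfolding e by measurable
      show "integrable M (\<lambda>\<omega>. (w (Suc k) i \<omega>)^2)" unfolding e
        by (rule sq_add_integrable) (use Ssq Z'sq in auto)
      have SZ: "expectation (\<lambda>\<omega>. S \<omega> * Z s l \<omega>) = 0" if "Suc k < s" for s l
      proof -
        have s1: "s \<ge> 1" using that by simp
        have int: "integrable M (\<lambda>\<omega>. w k j \<omega> * Z s l \<omega>)" for j
          by (rule sq_prod_integrable) (use wsq Zsq[OF s1] Zm[OF s1] in auto)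
        have "(\<lambda>\<omega>. S \<omega> * Z s l \<omega>) = (\<lambda>\<omega>. \<Sum>j\<in>UNIV. A $ i $ j * (w k j \<omega> * Z s l \<omega>))"
          by (simp add: S_def fun_eq_iff sum_distrib_right mult.assoc)
        then have "expectation (\<lambda>\<omega>. S \<omega> * Z s l \<omega>)
            = (\<Sum>j\<in>UNIV. A $ i $ j * expectation (\<lambda>\<omega>. w k j \<omega> * Z s l \<omega>))"
          using int by (simp add: integral_sum)
        also have "\<dots> = 0" using wZ[OF that] by simp
        finally show ?thesis .
      qed
      have SZ'int: "integrable M (\<lambda>\<omega>. S \<omega> * Z' \<omega>)"
        by (rule sq_prod_integrable) (use Ssq Z'sq in auto)
      have sq_eq: "(\<lambda>\<omega>. (w (Suc k) i \<omega>)^2) = (\<lambda>\<omega>. ((S \<omega>)^2 + 2 * (S \<omega> * Z' \<omega>)) + (Z' \<omega>)^2)"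
        unfolding e by (simp add: fun_eq_iff power2_sum algebra_simps)
      have "expectation (\<lambda>\<omega>. (w (Suc k) i \<omega>)^2)
          = expectation (\<lambda>\<omega>. (S \<omega>)^2) + 2 * expectation (\<lambda>\<omega>. S \<omega> * Z' \<omega>) + expectation (\<lambda>\<omega>. (Z' \<omega>)^2)"
        unfolding sq_eq using Ssq SZ'int Z'sq by (simp add: integral_add)
      moreover have "expectation (\<lambda>\<omega>. S \<omega> * Z' \<omega>) = 0" unfolding Z'_def by (rule SZ) simp
      moreover have "expectation (\<lambda>\<omega>. (S \<omega>)^2) \<le> real (Suc k) * V"
      proof -
        have "expectation (\<lambda>\<omega>. (S \<omega>)^2) \<le> expectation (\<lambda>\<omega>. \<Sum>j\<in>UNIV. A $ i $ j * (w k j \<omega>)^2)"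
          by (rule integral_mono) (use Ssq wsq in \<open>auto simp: S_def intro!: convex_sq rowsum Anonneg\<close>)
        also have "\<dots> = (\<Sum>j\<in>UNIV. A $ i $ j * expectation (\<lambda>\<omega>. (w k j \<omega>)^2))"
          using wsq by (simp add: integral_sum)
        also have "\<dots> \<le> (\<Sum>j\<in>UNIV. A $ i $ j * (real (Suc k) * V))"
          by (intro sum_mono mult_left_mono wE Anonneg)
        also have "\<dots> = real (Suc k) * V" by (simp add: sum_distrib_right[symmetric] rowsum)
        finally show ?thesis .
      qed
      ultimately show "expectation (\<lambda>\<omega>. (w (Suc k) i \<omega>)^2) \<le> real (Suc (Suc k)) * V"
        using Z'V by (simp add: algebra_simps)
      fix s j assume sk: "Suc (Suc k) < s"
      have s1: "s \<ge> 1" using sk by simp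
      have i1: "integrable M (\<lambda>\<omega>. S \<omega> * Z s j \<omega>)"
        by (rule sq_prod_integrable) (use Ssq Zsq[OF s1] Zm[OF s1] in auto)
      have i2: "integrable M (\<lambda>\<omega>. Z' \<omega> * Z s j \<omega>)"
        by (rule sq_prod_integrable) (use Z'sq Zsq[OF s1] Zm[OF s1] in auto)
      have "(\<lambda>\<omega>. w (Suc k) i \<omega> * Z s j \<omega>) = (\<lambda>\<omega>. S \<omega> * Z s j \<omega> + Z' \<omega> * Z s j \<omega>)"
        unfolding e by (simp add: fun_eq_iff algebra_simps)
      then have "expectation (\<lambda>\<omega>. w (Suc k) i \<omega> * Z s j \<omega>)
          = expectation (\<lambda>\<omega>. S \<omega> * Z s j \<omega>) + expectation (\<lambda>\<omega>. Z' \<omega> * Z s j \<omega>)"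
        using i1 i2 by simp
      also have "\<dots> = 0"
        using SZ[of s j] sk cross0[of "Suc (Suc k)" s i j] by (simp add: Z'_def)
      finally show "expectation (\<lambda>\<omega>. w (Suc k) i \<omega> * Z s j \<omega>) = 0" .
    qed
  qed
  have wm[measurable]: "w k i \<in> borel_measurable M" and wsq: "integrable M (\<lambda>\<omega>. (w k i \<omega>)^2)"
    and wE: "expectation (\<lambda>\<omega>. (w k i \<omega>)^2) \<le> real (Suc k) * V" for k i
    using main[of k] by blast+
  have Vnn: "0 \<le> V" unfolding V_def by (intro integral_nonneg_AE AE_I2) simp
  define N where "N = real CARD('n)"
  have N1: "1 \<le> N" unfolding N_def using assms(2) by simp
  have th_comp: "theta_hat A X (Suc k) \<omega> - (\<chi> i. \<theta>) = (\<chi> i. w k i \<omega> / real (Suc k))" for k \<omega>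
    by (simp add: vec_eq_iff theta_hat_def w_def)
  have normsq: "(norm (v::real^'n))^2 = (\<Sum>i\<in>UNIV. (v$i)^2)" for v
    unfolding power2_norm_eq_inner by (simp add: inner_vec_def power2_eq_square)
  have bound: "expectation (\<lambda>\<omega>. (norm (theta_hat A X (Suc k) \<omega> - (\<chi> i. \<theta>)))^2) \<le> N * V / real (Suc k)" for k
  proof -
    have "(\<lambda>\<omega>. (norm (theta_hat A X (Suc k) \<omega> - (\<chi> i. \<theta>)))^2)
        = (\<lambda>\<omega>. \<Sum>i\<in>UNIV. (w k i \<omega>)^2 / (real (Suc k))^2)"
      by (simp add: th_comp normsq fun_eq_iff power_divide)
    then have "expectation (\<lambda>\<omega>. (norm (theta_hat A X (Suc k) \<omega> - (\<chi> i. \<theta>)))^2)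
        = (\<Sum>i\<in>UNIV. expectation (\<lambda>\<omega>. (w k i \<omega>)^2) / (real (Suc k))^2)"
      using wsq by (simp add: integral_sum)
    also have "\<dots> \<le> (\<Sum>i\<in>(UNIV::'n set). real (Suc k) * V / (real (Suc k))^2)"
      by (intro sum_mono divide_right_mono) (use wE in auto)
    also have "\<dots> = N * V / real (Suc k)" by (simp add: N_def power2_eq_square)
    finally show ?thesis .
  qed
  have rhs: "expectation (\<lambda>\<omega>. (norm (obs_vec X 1 \<omega> - (\<chi> i. \<theta>)))^2) = N * V"
  proof -
    have "(\<lambda>\<omega>. (norm (obs_vec X 1 \<omega> - (\<chi> i. \<theta>)))^2) = (\<lambda>\<omega>. \<Sum>i\<in>UNIV. (Z 1 i \<omega>)^2)"
      by (simp add: normsq obs_vec_def Z_def fun_eq_iff)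
    then show ?thesis using Zsq[of 1] ZV[of 1] by (simp add: integral_sum N_def)
  qed
  have P1: "expectation (\<lambda>\<omega>. (norm (theta_hat A X t \<omega> - (\<chi> i. \<theta>)))^2)
      \<le> N / real t * expectation (\<lambda>\<omega>. (norm (obs_vec X 1 \<omega> - (\<chi> i. \<theta>)))^2)" if "t \<ge> 1" for t
  proof -
    obtain k where t: "t = Suc k" using \<open>t \<ge> 1\<close> by (cases t) auto
    have "N * V \<le> N * (N * V)" using N1 Vnn
      by (metis mult_left_le_one_le mult.commute mult_nonneg_nonneg order_trans zero_le_one
          mult_right_mono mult_1_left)
    then have "N * V / real t \<le> N * (N * V) / real t" by (intro divide_right_mono) auto
    then show ?thesis using bound[of k] rhs t by simp
  qed
  have P2: "(\<lambda>t. expectation (\<lambda>\<omega>. (norm (theta_hat A X t \<omega> - (\<chi> i. \<theta>)))^2)) \<longlonglongrightarrow> 0"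
  proof (rule tendsto_sandwich[where f="\<lambda>_. 0" and h="\<lambda>t. N * V / real t"])
    show "\<forall>\<^sub>F n in sequentially. 0 \<le> expectation (\<lambda>\<omega>. (norm (theta_hat A X n \<omega> - (\<chi> i. \<theta>)))^2)"
      by (intro always_eventually allI integral_nonneg_AE AE_I2) simp
    show "\<forall>\<^sub>F n in sequentially. expectation (\<lambda>\<omega>. (norm (theta_hat A X n \<omega> - (\<chi> i. \<theta>)))^2) \<le> N * V / real n"
    proof (rule eventually_sequentiallyI[of 1])
      fix t :: nat assume "1 \<le> t"
      then obtain k where t: "t = Suc k" by (cases t) auto
      show "expectation (\<lambda>\<omega>. (norm (theta_hat A X t \<omega> - (\<chi> i. \<theta>)))^2) \<le> N * V / real t"
        using bound[of k] t by simp
    qed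
    show "(\<lambda>_. 0) \<longlonglongrightarrow> (0::real)" by simp
    show "(\<lambda>t. N * V / real t) \<longlonglongrightarrow> 0" by (rule lim_const_over_n)
  qed
  have P3: "(\<lambda>t. measure M {\<omega> \<in> space M. \<bar>theta_hat A X t \<omega> $ i - \<theta>\<bar> > \<epsilon>}) \<longlonglongrightarrow> 0"
    if "\<epsilon> > 0" for i \<epsilon>
  proof (rule tendsto_sandwich[where f="\<lambda>_. 0" and h="\<lambda>t. (V / \<epsilon>^2) / real t"])
    show "\<forall>\<^sub>F n in sequentially. 0 \<le> measure M {\<omega> \<in> space M. \<bar>theta_hat A X n \<omega> $ i - \<theta>\<bar> > \<epsilon>}"
      by simp
    show "\<forall>\<^sub>F n in sequentially. measure M {\<omega> \<in> space M. \<bar>theta_hat A X n \<omega> $ i - \<theta>\<bar> > \<epsilon>} \<le> (V / \<epsilon>^2) / real n"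
    proof (rule eventually_sequentiallyI[of 1])
      fix t :: nat assume "1 \<le> t"
      then obtain k where t: "t = Suc k" by (cases t) auto
      define f where "f = (\<lambda>\<omega>. w k i \<omega> / real (Suc k))"
      have fe: "theta_hat A X t \<omega> $ i - \<theta> = f \<omega>" for \<omega>
        using th_comp[of k \<omega>] unfolding t f_def by (simp add: vec_eq_iff)
      have fm[measurable]: "f \<in> borel_measurable M" unfolding f_def by measurable
      have fsq: "integrable M (\<lambda>x. f x ^ 2)" using wsq[of k i] by (simp add: f_def power_divide)
      have fE: "expectation (\<lambda>x. f x ^ 2) \<le> V / real (Suc k)"
      proof -
        have "expectation (\<lambda>x. f x ^ 2) = expectation (\<lambda>x. (w k i x)^2) / (real (Suc k))^2"
          by (simp add: f_def power_divide)
        also have "\<dots> \<le> real (Suc k) * V / (real (Suc k))^2"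
          by (intro divide_right_mono wE) simp
        also have "\<dots> = V / real (Suc k)" by (simp add: power2_eq_square)
        finally show ?thesis .
      qed
      have "measure M {\<omega> \<in> space M. \<bar>theta_hat A X t \<omega> $ i - \<theta>\<bar> > \<epsilon>}
          \<le> measure M {x\<in>space M. \<bar>f x\<bar> \<ge> \<epsilon>}"
        unfolding fe by (rule finite_measure_mono) (auto, measurable)
      also have "\<dots> \<le> expectation (\<lambda>x. f x ^ 2) / \<epsilon>^2"
        by (rule second_moment_method) (use fsq that in auto)
      also have "\<dots> \<le> (V / real (Suc k)) / \<epsilon>^2"
        by (intro divide_right_mono fE) simp
      also have "\<dots> = (V / \<epsilon>^2) / real t" using t by simp
      finally show "measure M {\<omega> \<in> space M. \<bar>theta_hat A X t \<omega> $ i - \<theta>\<bar> > \<epsilon>} \<le> (V / \<epsilon>^2) / real t" .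
    qed
    show "(\<lambda>_. 0) \<longlonglongrightarrow> (0::real)" by simp
    show "(\<lambda>t. (V / \<epsilon>^2) / real t) \<longlonglongrightarrow> 0" by (rule lim_const_over_n)
  qed
  show ?thesis
    unfolding \<theta>_def[symmetric] N_def[symmetric] using P1 P2 P3 by blast
qed

end
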